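(* Let $k\ge1$, $\ell\ge2$ an integer, $W^k=\,]-1/2,1/2]^k$, and let $\Lambda\subset\mathbf{R}^k$ be a lattice of covolume $1$ such that $D_c(W^k+\Lambda)\ge1/\ell$. Then for every $v_1,\dots,v_\ell\in\mathbf{R}^k$ there exist $i\neq i'\in\{1,\dots,\ell\}$ such that \[D_c\big((W^k+\Lambda+v_i)\cap(W^k+\Lambda+v_{i'})\big)\ge2\,\frac{\ell D_c(W^k+\Lambda)-1}{\ell(\ell-1)}.\]
   Context: For $E\subset\mathbf{R}^k$, $D_c(E)=\lim_{R\to\infty}\operatorname{Leb}(B_R\cap E)/\operatorname{Leb}(B_R)$, where $B_R=\{x:\|x\|_\infty\le R\}$. *)

theory Defs
  imports "HOL-Analysis.Analysis"
begin

definition supball :: "real \<Rightarrow> (real^'n::finite) set" where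
  "supball R = {x. \<forall>i. \<bar>x $ i\<bar> \<le> R}"

definition Dc :: "(real^'n::finite) set \<Rightarrow> real" where
  "Dc E = Lim at_top (\<lambda>R. measure lebesgue (supball R \<inter> E) / measure lebesgue (supball R :: (real^'n) set))"

definition Wcube :: "(real^'n::finite) set" where
  "Wcube = {x. \<forall>i. -1/2 < x $ i \<and> x $ i \<le> 1/2}"

definition int_points :: "(real^'n::finite) set" where
  "int_points = {z. \<forall>i. z $ i \<in> \<int>}"

definition covol1_lattice :: "(real^'n::finite) set \<Rightarrow> bool" where
  "covol1_lattice L \<longleftrightarrow> (\<exists>A :: real^'n::finite^'n. \<bar>det A\<bar> = 1 \<and> L = (\<lambda>z. A *v z) ` int_points)"

definition msum :: "(real^'n::finite) set \<Rightarrow> (real^'n::finite) set \<Rightarrow> (real^'n::finite) set" where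
  "msum A B = {a + b | a b. a \<in> A \<and> b \<in> B}"

end

theory Submission
  imports Defs
begin


definition Qc :: "real^'n::finite \<Rightarrow> real \<Rightarrow> (real^'n) set" where
  "Qc p R = {x. \<forall>i. \<bar>x $ i - p $ i\<bar> \<le> R}"

lemma Qc_cbox: "Qc p R = cbox (p - (\<chi> i. R)) (p + (\<chi> i. R))"
  by (auto simp: Qc_def mem_box_cart abs_le_iff algebra_simps)

lemma Qc_lmeasurable[simp]: "Qc p R \<in> lmeasurable"
  unfolding Qc_cbox by simp

lemma measure_Qc: fixes p :: "real^'n::finite" shows "R \<ge> 0 \<Longrightarrow> measure lebesgue (Qc p R) = (2*R) ^ CARD('n)"
proof -
  assume R: "R \<ge> 0"
  have "p \<in> Qc p R" using R by (simp add: Qc_def)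
  then have ne: "cbox (p - (\<chi> i. R)) (p + (\<chi> i. R)) \<noteq> {}"
    unfolding Qc_cbox by auto
  have "measure lebesgue (Qc p R) = measure lborel (cbox (p - (\<chi> i. R)) (p + (\<chi> i. R)))"
    unfolding Qc_cbox by (simp add: measure_completion)
  also have "\<dots> = (\<Prod>i\<in>(UNIV::'n set). 2*R)"
    by (subst content_cbox_cart[OF ne]) simp
  finally show ?thesis by simp
qed

lemma supball_Qc: "supball R = Qc 0 R" by (simp add: supball_def Qc_def)

definition U01 :: "(real^'n::finite) set" where "U01 = {u. \<forall>i. 0 \<le> u$i \<and> u$i < 1}"
definition FD :: "real^'n^'n::finite \<Rightarrow> (real^'n) set" where "FD A = (\<lambda>u. A *v u) ` U01"
definition cA :: "real^'n^'n::finite \<Rightarrow> real" where "cA A = (\<Sum>i\<in>UNIV. \<Sum>j\<in>UNIV. \<bar>A$i$j\<bar>)"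

lemma cA_nonneg: "cA A \<ge> 0" unfolding cA_def by (intro sum_nonneg) auto

lemma FD_bound: assumes "y \<in> FD A" shows "\<bar>y$i\<bar> \<le> cA A"
proof -
  obtain u where u: "u \<in> U01" "y = A *v u" using assms by (auto simp: FD_def)
  have "\<bar>y$i\<bar> = \<bar>\<Sum>j\<in>UNIV. A$i$j * u$j\<bar>" by (simp add: u matrix_vector_mult_def)
  also have "\<dots> \<le> (\<Sum>j\<in>UNIV. \<bar>A$i$j * u$j\<bar>)" by (rule sum_abs)
  also have "\<dots> \<le> (\<Sum>j\<in>UNIV. \<bar>A$i$j\<bar>)"
  proof (intro sum_mono)
    fix j
    have "\<bar>u$j\<bar> \<le> 1" using u(1) by (auto simp: U01_def) (smt (verit))
    then show "\<bar>A$i$j * u$j\<bar> \<le> \<bar>A$i$j\<bar>" by (simp add: abs_mult mult_left_le)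
  qed
  also have "\<dots> \<le> cA A" unfolding cA_def
    by (rule member_le_sum[where f = "\<lambda>i. \<Sum>j\<in>UNIV. \<bar>A$i$j\<bar>"]) (auto intro: sum_nonneg)
  finally show ?thesis .
qed

lemma FD_diff: "y \<in> FD A \<Longrightarrow> y' \<in> FD A \<Longrightarrow> \<bar>y'$i - y$i\<bar> \<le> 2 * cA A"
  using FD_bound[of y A i] FD_bound[of y' A i] by linarith

lemma zero_FD: "0 \<in> FD A"
  unfolding FD_def U01_def by (rule image_eqI[of _ _ 0]) auto

lemma int_points_add: "z \<in> int_points \<Longrightarrow> z' \<in> int_points \<Longrightarrow> z + z' \<in> int_points"
  by (auto simp: int_points_def)
lemma int_points_diff: "z \<in> int_points \<Longrightarrow> z' \<in> int_points \<Longrightarrow> z - z' \<in> int_points"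
  by (auto simp: int_points_def)
lemma int_points_uminus: "z \<in> int_points \<Longrightarrow> - z \<in> int_points"
  by (auto simp: int_points_def)
lemma int_points_zero: "0 \<in> int_points"
  by (auto simp: int_points_def)

lemma countable_int_points: "countable (int_points :: (real^'n::finite) set)"
proof -
  have "int_points \<subseteq> range (\<lambda>f::'n \<Rightarrow> int. (\<chi> i. real_of_int (f i)) :: real^'n)"
  proof
    fix z :: "real^'n" assume "z \<in> int_points"
    then have "\<forall>i. \<exists>k. z $ i = real_of_int k" unfolding int_points_def by (auto elim: Ints_cases)
    then obtain f where "\<forall>i. z $ i = real_of_int (f i)" by metis
    then show "z \<in> range (\<lambda>f::'n \<Rightarrow> int. (\<chi> i. real_of_int (f i)) :: real^'n)"
      by (intro image_eqI[of _ _ f]) (auto simp: vec_eq_iff)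
  qed
  then show ?thesis by (rule countable_subset) simp
qed

lemma FD_tile_ex:
  fixes A :: "real^'n^'n::finite"
  assumes "det A \<noteq> 0"
  shows "\<exists>z\<in>int_points. x - A *v z \<in> FD A"
proof -
  obtain B where AB: "A ** B = mat 1" using assms invertible_det_nz invertible_def by blast
  define w where "w = B *v x"
  define z :: "real^'n" where "z = (\<chi> i. of_int \<lfloor>w$i\<rfloor>)"
  have "z \<in> int_points" by (simp add: z_def int_points_def)
  moreover have "w - z \<in> U01" by (auto simp: U01_def z_def) (smt (verit) real_of_int_floor_add_one_gt)
  moreover have "x - A *v z = A *v (w - z)"
    by (simp add: w_def matrix_vector_mult_diff_distrib matrix_vector_mul_assoc AB)
  ultimately show ?thesis unfolding FD_def by blast
qed

lemma FD_tile_uniq: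
  fixes A :: "real^'n^'n::finite"
  assumes "det A \<noteq> 0" "y \<in> FD A" "y' \<in> FD A" "z \<in> int_points" "z' \<in> int_points"
    and eq: "y + A *v z = y' + A *v z'"
  shows "z = z'"
proof -
  obtain B where BA: "B ** A = mat 1" using assms invertible_det_nz invertible_def by blast
  obtain u u' where u: "u \<in> U01" "y = A *v u" "u' \<in> U01" "y' = A *v u'"
    using assms(2,3) by (auto simp: FD_def)
  have "A *v (u + z) = A *v (u' + z')" using eq u by (simp add: matrix_vector_right_distrib)
  then have "B *v (A *v (u + z)) = B *v (A *v (u' + z'))" by simp
  then have e: "u + z = u' + z'" by (simp add: matrix_vector_mul_assoc BA)
  show ?thesis
  unfolding vec_eq_iff
  proof
    fix i
    obtain a where a: "z$i = of_int a" using assms(4) unfolding int_points_def by (auto elim: Ints_cases)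
    obtain b where b: "z'$i = of_int b" using assms(5) unfolding int_points_def by (auto elim: Ints_cases)
    have "u$i + z$i = u'$i + z'$i" using e by (metis vector_add_component)
    moreover have "0 \<le> u$i" "u$i < 1" "0 \<le> u'$i" "u'$i < 1" using u by (auto simp: U01_def)
    ultimately have "\<bar>real_of_int a - real_of_int b\<bar> < 1" using a b by linarith
    then have "a = b" by linarith
    then show "z$i = z'$i" using a b by simp
  qed
qed

lemma FD_borel:
  fixes A :: "real^'n^'n::finite"
  assumes "det A \<noteq> 0"
  shows "FD A \<in> sets lebesgue"
proof -
  obtain B where AB: "A ** B = mat 1" and BA: "B ** A = mat 1"
    using assms invertible_det_nz invertible_def by blast
  have eq: "FD A = {x. \<forall>i. 0 \<le> (B *v x) $ i \<and> (B *v x) $ i < 1}"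
  proof safe
    fix x assume "x \<in> FD A"
    then obtain u where "u \<in> U01" "x = A *v u" by (auto simp: FD_def)
    then show "0 \<le> (B *v x) $ i" "(B *v x) $ i < 1" for i
      by (auto simp: matrix_vector_mul_assoc BA U01_def)
  next
    fix x assume "\<forall>i. 0 \<le> (B *v x) $ i \<and> (B *v x) $ i < 1"
    then have "B *v x \<in> U01" by (simp add: U01_def)
    moreover have "x = A *v (B *v x)" by (simp add: matrix_vector_mul_assoc AB)
    ultimately show "x \<in> FD A" unfolding FD_def by blast
  qed
  have c: "(\<lambda>x. (B *v x) $ i) \<in> borel_measurable borel" for i
    by (intro borel_measurable_continuous_onI continuous_intros linear_continuous_on) auto
  have "{x. \<forall>i. 0 \<le> (B *v x) $ i \<and> (B *v x) $ i < 1} \<in> sets borel"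
    using c by measurable
  then show ?thesis unfolding eq by (intro sets_completionI_sets) (simp add: sets_lborel)
qed

lemma Wcube_borel: "(Wcube :: (real^'n::finite) set) \<in> sets lebesgue"
proof -
  have "(Wcube :: (real^'n::finite) set) \<in> sets borel" unfolding Wcube_def by measurable
  then show ?thesis by (intro sets_completionI_sets) (simp add: sets_lborel)
qed

lemma FD_bounded: "bounded (FD A)"
proof -
  have "FD A \<subseteq> Qc 0 (cA A)" using FD_bound by (auto simp: Qc_def)
  then show ?thesis unfolding Qc_cbox by (rule bounded_subset[OF bounded_cbox])
qed

lemma tendsto_ratio: "((\<lambda>R. (R + a) / R :: real) \<longlongrightarrow> 1) at_top"
proof -
  have "((\<lambda>R. 1 + a / R :: real) \<longlongrightarrow> 1 + 0) at_top"
    by (intro tendsto_add tendsto_const tendsto_divide_0[OF tendsto_const] filterlim_at_top_imp_at_infinity[OF filterlim_ident])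
  moreover have "eventually (\<lambda>R. 1 + a / R = (R + a) / R) at_top"
    using eventually_gt_at_top[of 0] by eventually_elim (simp add: field_simps)
  ultimately show ?thesis using tendsto_cong by fastforce
qed

definition per :: "real^'n^'n::finite \<Rightarrow> (real^'n) set \<Rightarrow> bool" where
  "per A S \<longleftrightarrow> (\<forall>x. \<forall>z\<in>int_points. (x + A *v z \<in> S \<longleftrightarrow> x \<in> S))"

definition Tr :: "real^'n::finite \<Rightarrow> (real^'n) set \<Rightarrow> (real^'n) set" where "Tr a X = (+) a ` X"

lemma measure_Tr: "measure lebesgue (Tr a X) = measure lebesgue X"
  by (simp add: Tr_def measure_translation)
lemma Tr_sets: "X \<in> sets lebesgue \<Longrightarrow> Tr a X \<in> sets lebesgue"
  using lebesgue_sets_translation[of X a] by (simp add: Tr_def)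
lemma Tr_lmeas: "X \<in> lmeasurable \<Longrightarrow> Tr a X \<in> lmeasurable"
  by (simp add: Tr_def measurable_translation)
lemma mem_Tr: "y \<in> Tr a X \<longleftrightarrow> y - a \<in> X"
  unfolding Tr_def image_iff by (metis add_diff_cancel_left' diff_add_cancel add.commute)



lemma sandw:
  fixes M :: "real \<Rightarrow> real" and c d \<delta> :: real and n :: nat
  assumes c0: "c \<ge> 0" and dpos: "\<delta> > 0"
   and bounds: "\<And>R. R \<ge> 2*c \<Longrightarrow> (2*(R - 2*c))^n * d / \<delta> \<le> M R \<and> M R \<le> (2*(R + 2*c))^n * d / \<delta>"
  shows "((\<lambda>R. M R / (2*R)^n) \<longlongrightarrow> d / \<delta>) at_top"
proof -
  define f where "f = (\<lambda>R. M R / (2*R)^n)"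
  define lo where "lo R = ((R + (-2*c)) / R)^n * (d / \<delta>)" for R
  define hi where "hi R = ((R + 2*c) / R)^n * (d / \<delta>)" for R
  have ev: "eventually (\<lambda>R. lo R \<le> f R \<and> f R \<le> hi R) at_top"
    using eventually_ge_at_top[of "2*c + 1"]
  proof eventually_elim
    case (elim R)
    then have Rpos: "R > 0" "R \<ge> 2*c" using c0 by auto
    have pos: "(2*R)^n > 0" using Rpos by simp
    have q1: "(2*(R - 2*c)) / (2*R) = (R + -2*c)/R" using Rpos by (simp add: field_simps)
    have q2: "(2*(R + 2*c)) / (2*R) = (R + 2*c)/R" using Rpos by (simp add: field_simps)
    have gen: "a * d / \<delta> / b = (a / b) * (d / \<delta>)" for a b :: real by simp
    have e1: "lo R = (2*(R - 2*c))^n * d / \<delta> / (2*R)^n"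
      unfolding lo_def gen power_divide[symmetric] q1 ..
    have e2: "hi R = (2*(R + 2*c))^n * d / \<delta> / (2*R)^n"
      unfolding hi_def gen power_divide[symmetric] q2 ..
    have b: "(2*(R - 2*c))^n * d / \<delta> \<le> M R" "M R \<le> (2*(R + 2*c))^n * d / \<delta>"
      using bounds[OF Rpos(2)] by auto
    show ?case unfolding e1 e2 f_def using pos by (intro conjI divide_right_mono b less_imp_le)
  qed
  have "(lo \<longlongrightarrow> 1^n * (d / \<delta>)) at_top" unfolding lo_def
    by (intro tendsto_mult tendsto_power tendsto_ratio tendsto_const)
  moreover have "(hi \<longlongrightarrow> 1^n * (d / \<delta>)) at_top" unfolding hi_def
    by (intro tendsto_mult tendsto_power tendsto_ratio tendsto_const)
  ultimately have "(f \<longlongrightarrow> d / \<delta>) at_top"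
    using ev by (intro tendsto_sandwich[of lo f _ hi]) (auto elim: eventually_mono)
  then show ?thesis unfolding f_def .
qed

lemma density_periodic:
  fixes A :: "real^'n^'n::finite" and S :: "(real^'n) set" and p :: "real^'n"
  assumes detA: "det A \<noteq> 0" and Sm: "S \<in> sets lebesgue" and per: "per A S"
  shows "((\<lambda>R. measure lebesgue (Qc p R \<inter> S) / (2*R)^CARD('n))
            \<longlongrightarrow> measure lebesgue (S \<inter> FD A) / measure lebesgue (FD A)) at_top"
proof -
  define c where "c = cA A"
  define \<delta> where "\<delta> = measure lebesgue (FD A)"
  define d where "d = measure lebesgue (S \<inter> FD A)"
  define n where "n = CARD('n)"
  define Fz where "Fz z = Tr (A *v z) (FD A)" for z
  define SFz where "SFz z = Tr (A *v z) (S \<inter> FD A)" for z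
  have c0: "c \<ge> 0" using cA_nonneg c_def by simp
  have FDm: "FD A \<in> sets lebesgue" by (rule FD_borel[OF detA])
  have FDl: "FD A \<in> lmeasurable" by (rule bounded_set_imp_lmeasurable[OF FD_bounded FDm])
  have SFDl: "S \<inter> FD A \<in> lmeasurable"
    by (rule bounded_set_imp_lmeasurable) (use FD_bounded bounded_subset FDm Sm in auto)
  have Fzl: "Fz z \<in> lmeasurable" for z unfolding Fz_def by (rule Tr_lmeas[OF FDl])
  have SFzl: "SFz z \<in> lmeasurable" for z unfolding SFz_def by (rule Tr_lmeas[OF SFDl])
  have Fzs: "Fz z \<in> sets lebesgue" for z using fmeasurableD[OF Fzl] .
  have SFzs: "SFz z \<in> sets lebesgue" for z using fmeasurableD[OF SFzl] .
  have UF: "(\<Union>z\<in>K. Fz z) \<in> sets lebesgue" if "finite K" for K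
    using that Fzs by (intro sets.finite_UN) auto
  have USF: "(\<Union>z\<in>K. SFz z) \<in> sets lebesgue" if "finite K" for K
    using that SFzs by (intro sets.finite_UN) auto
  have mFz: "measure lebesgue (Fz z) = \<delta>" for z by (simp add: Fz_def \<delta>_def measure_Tr)
  have mSFz: "measure lebesgue (SFz z) = d" for z by (simp add: SFz_def d_def measure_Tr)
  have d0: "d \<ge> 0" by (simp add: d_def)
  have memFz: "x \<in> Fz z \<longleftrightarrow> x - A *v z \<in> FD A" for x z by (simp add: Fz_def mem_Tr)
  have memSFz: "x \<in> SFz z \<longleftrightarrow> x - A *v z \<in> S \<and> x - A *v z \<in> FD A" for x z by (simp add: SFz_def mem_Tr)
  have disj: "Fz z \<inter> Fz z' = {}" if "z \<in> int_points" "z' \<in> int_points" "z \<noteq> z'" for z z'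
  proof (rule ccontr)
    assume "Fz z \<inter> Fz z' \<noteq> {}"
    then obtain x where "x - A *v z \<in> FD A" "x - A *v z' \<in> FD A" using memFz by blast
    moreover have "(x - A *v z) + A *v z = (x - A *v z') + A *v z'" by simp
    ultimately have "z = z'" using FD_tile_uniq[OF detA _ _ that(1,2)] by blast
    with that(3) show False by simp
  qed
  have SFz_sub: "SFz z \<subseteq> Fz z" for z using memFz memSFz by blast
  have cover: "\<exists>z\<in>int_points. x \<in> Fz z" for x using FD_tile_ex[OF detA, of x] memFz by blast
  have SFz_S: "SFz z \<subseteq> S" if "z \<in> int_points" for z
  proof
    fix x assume "x \<in> SFz z"
    then have "x - A *v z \<in> S" using memSFz by blast
    then have "(x - A *v z) + A *v z \<in> S" using per that unfolding per_def by blast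
    then show "x \<in> S" by simp
  qed
  have \<delta>pos: "\<delta> > 0"
  proof (rule ccontr)
    assume "\<not> \<delta> > 0"
    then have "\<delta> = 0" using measure_nonneg[of lebesgue "FD A"] \<delta>_def by linarith
    then have "Fz z \<in> null_sets lebesgue" for z
      using Fzl[of z] mFz[of z] by (simp add: null_sets_def emeasure_eq_measure2 fmeasurableD)
    then have U: "(\<Union>z\<in>int_points. Fz z) \<in> null_sets lebesgue"
      by (intro null_sets_UN' countable_int_points)
    have sub: "Qc 0 1 \<subseteq> (\<Union>z\<in>int_points. Fz z)" using cover by blast
    have "Qc (0::real^'n) 1 \<in> null_sets lebesgue"
      using U sub null_sets_subset fmeasurableD[OF Qc_lmeasurable[of "0::real^'n" 1]] by metis
    then have "measure lebesgue (Qc (0::real^'n) 1) = 0" by (rule measure_eq_0_null_sets)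
    with measure_Qc[of 1 "0::real^'n"] show False by simp
  qed
  have bounds: "(2*(R - 2*c))^n * d / \<delta> \<le> measure lebesgue (Qc p R \<inter> S) \<and>
                measure lebesgue (Qc p R \<inter> S) \<le> (2*(R + 2*c))^n * d / \<delta>" if R: "R \<ge> 2*c" for R
  proof -
    define H where "H = {z\<in>int_points. Fz z \<inter> Qc p R \<noteq> {}}"
    define G where "G = {z\<in>int_points. Fz z \<subseteq> Qc p R}"
    have Hsub: "Fz z \<subseteq> Qc p (R + 2*c)" if "z \<in> H" for z
    proof
      fix x assume x: "x \<in> Fz z"
      obtain x0 where x0: "x0 \<in> Fz z" "x0 \<in> Qc p R" using \<open>z \<in> H\<close> unfolding H_def by blast
      show "x \<in> Qc p (R + 2*c)" unfolding Qc_def mem_Collect_eq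
      proof
        fix i
        have "\<bar>(x - A *v z)$i - (x0 - A *v z)$i\<bar> \<le> 2 * c"
          using FD_diff[of "x0 - A *v z" A "x - A *v z" i] x x0 memFz c_def by blast
        moreover have "\<bar>x0$i - p$i\<bar> \<le> R" using x0(2) by (simp add: Qc_def)
        ultimately show "\<bar>x$i - p$i\<bar> \<le> R + 2*c" by simp
      qed
    qed
    have cardK: "real (card K) * \<delta> \<le> (2*(R+2*c))^n" if K: "finite K" "K \<subseteq> H" for K
    proof -
      have "measure lebesgue (\<Union>z\<in>K. Fz z) = (\<Sum>z\<in>K. measure lebesgue (Fz z))"
      proof (rule measure_finite_Union[OF K(1)])
        show "Fz ` K \<subseteq> sets lebesgue" using Fzs by auto
        have "K \<subseteq> int_points" using K(2) unfolding H_def by auto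
        then show "disjoint_family_on Fz K" unfolding disjoint_family_on_def
          using disj by auto
        show "emeasure lebesgue (Fz z) \<noteq> \<infinity>" for z using fmeasurableD2[OF Fzl[of z]] by simp
      qed
      also have "\<dots> = real (card K) * \<delta>" by (simp add: mFz)
      finally have eq: "measure lebesgue (\<Union>z\<in>K. Fz z) = real (card K) * \<delta>" .
      have "measure lebesgue (\<Union>z\<in>K. Fz z) \<le> measure lebesgue (Qc p (R + 2*c))"
      proof (rule measure_mono_fmeasurable[OF _ UF[OF K(1)] Qc_lmeasurable])
        show "(\<Union>z\<in>K. Fz z) \<subseteq> Qc p (R + 2*c)" using Hsub K(2) by blast
      qed
      also have "\<dots> = (2*(R+2*c))^n" using R c0 by (simp add: measure_Qc n_def)
      finally show ?thesis using eq by simp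
    qed
    have Hfin: "finite H"
    proof (rule ccontr)
      assume "infinite H"
      define N where "N = nat \<lceil>(2*(R+2*c))^n / \<delta>\<rceil> + 1"
      obtain K where K: "K \<subseteq> H" "finite K" "card K = N"
        using infinite_arbitrarily_large[OF \<open>infinite H\<close>] by blast
      then have "real N * \<delta> \<le> (2*(R+2*c))^n" using cardK by auto
      moreover have "real N > (2*(R+2*c))^n / \<delta>" unfolding N_def by linarith
      then have "real N * \<delta> > (2*(R+2*c))^n" using \<delta>pos by (simp add: pos_divide_less_eq)
      ultimately show False by simp
    qed
    have GH: "G \<subseteq> H"
    proof
      fix z assume "z \<in> G"
      moreover have "A *v z \<in> Fz z" using memFz zero_FD by simp
      ultimately show "z \<in> H" unfolding G_def H_def by blast
    qed
    have Gfin: "finite G" using Hfin GH finite_subset by blast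
    have QSl: "Qc p R \<inter> S \<in> lmeasurable"
      by (rule bounded_set_imp_lmeasurable) (use Sm in \<open>auto simp: Qc_cbox intro: bounded_subset[OF bounded_cbox]\<close>)
    have cardH: "real (card H) * \<delta> \<le> (2*(R+2*c))^n" using cardK[OF Hfin] by simp
    have sub1: "Qc p R \<inter> S \<subseteq> (\<Union>z\<in>H. SFz z)"
    proof
      fix x assume x: "x \<in> Qc p R \<inter> S"
      obtain z where z: "z \<in> int_points" "x \<in> Fz z" using cover by blast
      have "(x - A *v z) + A *v z \<in> S" using x by simp
      then have "x - A *v z \<in> S" using per z(1) unfolding per_def by blast
      then have "x \<in> SFz z" using memSFz memFz z by blast
      moreover have "z \<in> H" using z x unfolding H_def by blast
      ultimately show "x \<in> (\<Union>z\<in>H. SFz z)" by blast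
    qed
    have Ul: "(\<Union>z\<in>H. SFz z) \<in> lmeasurable"
    proof (rule bounded_set_imp_lmeasurable)
      have "(\<Union>z\<in>H. SFz z) \<subseteq> Qc p (R + 2*c)" using Hsub SFz_sub by blast
      then show "bounded (\<Union>z\<in>H. SFz z)" unfolding Qc_cbox by (rule bounded_subset[OF bounded_cbox])
      show "(\<Union>z\<in>H. SFz z) \<in> sets lebesgue" by (rule USF[OF Hfin])
    qed
    have "measure lebesgue (Qc p R \<inter> S) \<le> measure lebesgue (\<Union>z\<in>H. SFz z)"
      by (rule measure_mono_fmeasurable[OF sub1 fmeasurableD[OF QSl] Ul])
    also have "\<dots> \<le> (\<Sum>z\<in>H. measure lebesgue (SFz z))"
      by (rule measure_UNION_le[OF Hfin SFzs])
    also have "\<dots> = real (card H) * d" by (simp add: mSFz)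
    also have "\<dots> \<le> (2*(R + 2*c))^n * d / \<delta>"
    proof -
      have "real (card H) \<le> (2*(R+2*c))^n / \<delta>" using cardH \<delta>pos by (simp add: pos_le_divide_eq)
      then show ?thesis using d0 mult_right_mono by fastforce
    qed
    finally have up: "measure lebesgue (Qc p R \<inter> S) \<le> (2*(R + 2*c))^n * d / \<delta>" .
    have Gint: "G \<subseteq> int_points" unfolding G_def by auto
    have sub2: "(\<Union>z\<in>G. SFz z) \<subseteq> Qc p R \<inter> S"
    proof
      fix x assume "x \<in> (\<Union>z\<in>G. SFz z)"
      then obtain z where z: "z \<in> G" "x \<in> SFz z" by blast
      have "x \<in> Fz z" using z(2) SFz_sub by blast
      moreover have "Fz z \<subseteq> Qc p R" using z(1) unfolding G_def by auto
      moreover have "x \<in> S" using SFz_S[of z] z Gint by blast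
      ultimately show "x \<in> Qc p R \<inter> S" by blast
    qed
    have "measure lebesgue (\<Union>z\<in>G. SFz z) = (\<Sum>z\<in>G. measure lebesgue (SFz z))"
    proof (rule measure_finite_Union[OF Gfin])
      show "SFz ` G \<subseteq> sets lebesgue" using SFzs by auto
      show "disjoint_family_on SFz G" unfolding disjoint_family_on_def
      proof (intro ballI impI)
        fix m k assume mk: "m \<in> G" "k \<in> G" "m \<noteq> k"
        then have "Fz m \<inter> Fz k = {}" using disj Gint by blast
        then show "SFz m \<inter> SFz k = {}" using SFz_sub[of m] SFz_sub[of k] by blast
      qed
      show "emeasure lebesgue (SFz z) \<noteq> \<infinity>" for z using fmeasurableD2[OF SFzl[of z]] by simp
    qed
    also have "\<dots> = real (card G) * d" by (simp add: mSFz)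
    finally have eqG: "measure lebesgue (\<Union>z\<in>G. SFz z) = real (card G) * d" .
    have lowG: "real (card G) * d \<le> measure lebesgue (Qc p R \<inter> S)"
      unfolding eqG[symmetric]
      by (rule measure_mono_fmeasurable[OF sub2 USF[OF Gfin] QSl])
    have sub3: "Qc p (R - 2*c) \<subseteq> (\<Union>z\<in>G. Fz z)"
    proof
      fix x assume x: "x \<in> Qc p (R - 2*c)"
      obtain z where z: "z \<in> int_points" "x \<in> Fz z" using cover by blast
      have "Fz z \<subseteq> Qc p R"
      proof
        fix x' assume x': "x' \<in> Fz z"
        show "x' \<in> Qc p R" unfolding Qc_def mem_Collect_eq
        proof
          fix i
          have "\<bar>(x' - A *v z)$i - (x - A *v z)$i\<bar> \<le> 2 * c"
            using FD_diff[of "x - A *v z" A "x' - A *v z" i] x' z memFz c_def by blast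
          moreover have "\<bar>x$i - p$i\<bar> \<le> R - 2*c" using x by (simp add: Qc_def)
          ultimately show "\<bar>x'$i - p$i\<bar> \<le> R" by simp
        qed
      qed
      then have "z \<in> G" using z(1) unfolding G_def by blast
      then show "x \<in> (\<Union>z\<in>G. Fz z)" using z(2) by blast
    qed
    have "(2*(R - 2*c))^n = measure lebesgue (Qc p (R - 2*c))"
      using R by (simp add: measure_Qc n_def)
    also have "\<dots> \<le> measure lebesgue (\<Union>z\<in>G. Fz z)"
    proof (rule measure_mono_fmeasurable[OF sub3])
      show "Qc p (R - 2*c) \<in> sets lebesgue" by (simp add: fmeasurableD)
      show "(\<Union>z\<in>G. Fz z) \<in> fmeasurable lebesgue"
      proof (rule bounded_set_imp_lmeasurable)
        have "(\<Union>z\<in>G. Fz z) \<subseteq> Qc p R" unfolding G_def by blast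
        then show "bounded (\<Union>z\<in>G. Fz z)" unfolding Qc_cbox by (rule bounded_subset[OF bounded_cbox])
        show "(\<Union>z\<in>G. Fz z) \<in> sets lebesgue" by (rule UF[OF Gfin])
      qed
    qed
    also have "\<dots> \<le> (\<Sum>z\<in>G. measure lebesgue (Fz z))"
      by (rule measure_UNION_le[OF Gfin Fzs])
    also have "\<dots> = real (card G) * \<delta>" by (simp add: mFz)
    finally have cG: "(2*(R - 2*c))^n \<le> real (card G) * \<delta>" .
    have "(2*(R - 2*c))^n * d / \<delta> \<le> real (card G) * d"
    proof -
      have "(2*(R - 2*c))^n / \<delta> \<le> real (card G)" using cG \<delta>pos by (simp add: pos_divide_le_eq)
      then show ?thesis using d0 mult_right_mono by fastforce
    qed
    with lowG up show ?thesis by linarith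
  qed
  have "((\<lambda>R. measure lebesgue (Qc p R \<inter> S) / (2*R)^n) \<longlongrightarrow> d / \<delta>) at_top"
    by (rule sandw[OF c0 \<delta>pos bounds])
  then show ?thesis unfolding n_def d_def \<delta>_def .
qed

lemma bonferroni:
  fixes X :: "nat \<Rightarrow> 'a set"
  assumes Xm: "\<And>i. X i \<in> fmeasurable M"
  shows "(\<Sum>i\<in>{1..k}. measure M (X i)) - (\<Sum>i\<in>{1..k}. \<Sum>j\<in>{1..<i}. measure M (X i \<inter> X j))
           \<le> measure M (\<Union>i\<in>{1..k}. X i)"
proof (induction k)
  case 0 then show ?case by simp
next
  case (Suc k)
  let ?U = "\<Union>i\<in>{1..k}. X i"
  have I: "{1..Suc k} = insert (Suc k) {1..k}" by auto
  have I2: "{1..<Suc k} = {1..k}" by auto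
  have nI: "Suc k \<notin> {1..k}" by simp
  have Ul: "?U \<in> fmeasurable M" using Xm by (intro fmeasurable.finite_UN) auto
  have e1: "(\<Union>i\<in>{1..Suc k}. X i) = X (Suc k) \<union> ?U" unfolding I by simp
  have "measure M (X (Suc k) \<inter> ?U) = measure M (\<Union>j\<in>{1..k}. X (Suc k) \<inter> X j)" by (simp only: Int_UN_distrib)
  also have "\<dots> \<le> (\<Sum>j\<in>{1..k}. measure M (X (Suc k) \<inter> X j))"
    by (rule measure_UNION_le) (auto intro: fmeasurableD[OF Xm])
  finally have b: "measure M (X (Suc k) \<inter> ?U) \<le> (\<Sum>j\<in>{1..k}. measure M (X (Suc k) \<inter> X j))" .
  have m: "measure M (\<Union>i\<in>{1..Suc k}. X i) = measure M (X (Suc k)) + measure M ?U - measure M (X (Suc k) \<inter> ?U)"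
    unfolding e1 by (rule measure_Un3[OF Xm Ul])
  have s1: "(\<Sum>i\<in>{1..Suc k}. measure M (X i)) = measure M (X (Suc k)) + (\<Sum>i\<in>{1..k}. measure M (X i))"
    unfolding I by (rule sum.insert[OF finite_atLeastAtMost nI])
  have s2: "(\<Sum>i\<in>{1..Suc k}. \<Sum>j\<in>{1..<i}. measure M (X i \<inter> X j)) =
      (\<Sum>j\<in>{1..k}. measure M (X (Suc k) \<inter> X j)) + (\<Sum>i\<in>{1..k}. \<Sum>j\<in>{1..<i}. measure M (X i \<inter> X j))"
    unfolding I by (subst sum.insert[OF finite_atLeastAtMost nI]) (simp only: I2)
  show ?case unfolding s1 s2 m using Suc.IH b by linarith
qed

lemma gauss_real: "(\<Sum>i\<in>{1..l}. real (card {1..<i})) = real l * (real l - 1) / 2"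
  by (induction l) (auto simp: sum.cl_ivl_Suc field_simps)

lemma per_Tr: "per A X \<Longrightarrow> per A (Tr a X)"
  unfolding per_def mem_Tr by (metis add_diff_eq diff_add_eq)

lemma per_Int: "per A X \<Longrightarrow> per A Y \<Longrightarrow> per A (X \<inter> Y)"
  unfolding per_def by blast

lemma supball_Tr: "supball R \<inter> Tr a X = Tr a (Qc (-a) R \<inter> X)"
  by (auto simp: supball_def Qc_def mem_Tr)

lemma measure_supball: "R \<ge> 0 \<Longrightarrow> measure lebesgue (supball R :: (real^'n::finite) set) = (2*R)^CARD('n)"
  by (simp add: supball_Qc measure_Qc)

lemma dens_lim:
  fixes A :: "real^'n^'n::finite"
  assumes detA: "det A \<noteq> 0" and Xm: "X \<in> sets lebesgue" and per: "per A X"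
  shows "((\<lambda>R. measure lebesgue (supball R \<inter> Tr a X) / measure lebesgue (supball R :: (real^'n) set))
            \<longlongrightarrow> measure lebesgue (X \<inter> FD A) / measure lebesgue (FD A)) at_top"
proof -
  have "((\<lambda>R. measure lebesgue (Qc (-a) R \<inter> X) / (2*R)^CARD('n))
            \<longlongrightarrow> measure lebesgue (X \<inter> FD A) / measure lebesgue (FD A)) at_top"
    by (rule density_periodic[OF detA Xm per])
  moreover have "eventually (\<lambda>R. measure lebesgue (Qc (-a) R \<inter> X) / (2*R)^CARD('n) =
      measure lebesgue (supball R \<inter> Tr a X) / measure lebesgue (supball R :: (real^'n) set)) at_top"
    using eventually_ge_at_top[of 0]
    by eventually_elim (simp add: measure_supball supball_Tr measure_Tr)
  ultimately show ?thesis by (rule tendsto_cong[THEN iffD1, rotated])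
qed

lemma Tr0: "Tr 0 X = X" by (simp add: Tr_def)

theorem lemma2p19:
  fixes L :: "(real^'n) set" and l :: nat and v :: "nat \<Rightarrow> real^'n"
  assumes "l \<ge> 2"
    and "covol1_lattice L"
    and "Dc (msum Wcube L) \<ge> 1 / real l"
  shows "\<exists>i\<in>{1..l}. \<exists>i'\<in>{1..l}. i \<noteq> i' \<and>
           Dc ((\<lambda>x. x + v i) ` msum Wcube L \<inter> (\<lambda>x. x + v i') ` msum Wcube L)
             \<ge> 2 * (real l * Dc (msum Wcube L) - 1) / (real l * (real l - 1))"
proof -
  from assms(2) obtain A :: "real^'n^'n" where detA1: "\<bar>det A\<bar> = 1" and L: "L = (\<lambda>z. A *v z) ` int_points"
    unfolding covol1_lattice_def by blast
  have detA: "det A \<noteq> 0" using detA1 by auto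
  define E where "E = msum Wcube L"
  have Eeq: "E = (\<Union>z\<in>int_points. Tr (A *v z) Wcube)"
  proof safe
    fix x assume "x \<in> E"
    then obtain a z where "a \<in> Wcube" "z \<in> int_points" "x = a + A *v z"
      unfolding E_def msum_def L by blast
    then show "x \<in> (\<Union>z\<in>int_points. Tr (A *v z) Wcube)" by (intro UN_I[of z]) (auto simp: mem_Tr)
  next
    fix x z assume "z \<in> int_points" "x \<in> Tr (A *v z) Wcube"
    then have "x - A *v z \<in> Wcube" "x = (x - A *v z) + A *v z" by (auto simp: mem_Tr)
    then show "x \<in> E" unfolding E_def msum_def L using \<open>z \<in> int_points\<close> by blast
  qed
  have Em: "E \<in> sets lebesgue" unfolding Eeq
    by (rule sets.countable_UN''[OF countable_int_points]) (simp add: Tr_sets Wcube_borel)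
  have Eper: "per A E" unfolding per_def
  proof (intro allI ballI)
    fix x z :: "real^'n" assume z: "z \<in> int_points"
    show "x + A *v z \<in> E \<longleftrightarrow> x \<in> E"
    proof
      assume "x + A *v z \<in> E"
      then obtain w where w: "w \<in> int_points" "x + A *v z - A *v w \<in> Wcube" unfolding Eeq by (auto simp: mem_Tr)
      have "x - A *v (w - z) \<in> Wcube" using w by (simp add: matrix_vector_mult_diff_distrib algebra_simps)
      then show "x \<in> E" unfolding Eeq using int_points_diff[OF w(1) z] by (auto simp: mem_Tr)
    next
      assume "x \<in> E"
      then obtain w where w: "w \<in> int_points" "x - A *v w \<in> Wcube" unfolding Eeq by (auto simp: mem_Tr)
      have "x + A *v z - A *v (w + z) \<in> Wcube" using w by (simp add: matrix_vector_right_distrib algebra_simps)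
      then show "x + A *v z \<in> E" unfolding Eeq using int_points_add[OF w(1) z] by (auto simp: mem_Tr)
    qed
  qed
  define Ei where "Ei i = Tr (v i) E" for i
  have Ei_eq: "(\<lambda>x. x + v i) ` E = Ei i" for i
    unfolding Ei_def Tr_def by (rule image_cong) (auto simp: add.commute)
  have Eim: "Ei i \<in> sets lebesgue" for i unfolding Ei_def by (rule Tr_sets[OF Em])
  have Eiper: "per A (Ei i)" for i unfolding Ei_def by (rule per_Tr[OF Eper])
  define fR :: "(real^'n) set \<Rightarrow> real \<Rightarrow> real" where "fR X R = measure lebesgue (supball R \<inter> X) / measure lebesgue (supball R :: (real^'n) set)" for X R
  define dE where "dE = measure lebesgue (E \<inter> FD A) / measure lebesgue (FD A)"
  define dd where "dd i j = measure lebesgue ((Ei i \<inter> Ei j) \<inter> FD A) / measure lebesgue (FD A)" for i j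
  have limE: "(fR (Ei i) \<longlongrightarrow> dE) at_top" for i
    unfolding fR_def Ei_def dE_def by (rule dens_lim[OF detA Em Eper])
  have limE0: "(fR E \<longlongrightarrow> dE) at_top"
    using dens_lim[OF detA Em Eper, of 0] unfolding fR_def dE_def Tr0 .
  have limdd: "(fR (Ei i \<inter> Ei j) \<longlongrightarrow> dd i j) at_top" for i j
    using dens_lim[OF detA _ per_Int[OF Eiper Eiper], of i j 0] Eim
    unfolding fR_def dd_def Tr0 by blast
  have DcE: "Dc E = dE" unfolding Dc_def
    using tendsto_Lim[OF trivial_limit_at_top_linorder limE0] unfolding fR_def .
  have Dcdd: "Dc (Ei i \<inter> Ei j) = dd i j" for i j unfolding Dc_def
    using tendsto_Lim[OF trivial_limit_at_top_linorder limdd] unfolding fR_def .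
  have ev: "eventually (\<lambda>R. (\<Sum>i\<in>{1..l}. fR (Ei i) R) - (\<Sum>i\<in>{1..l}. \<Sum>j\<in>{1..<i}. fR (Ei i \<inter> Ei j) R) \<le> 1) at_top"
    using eventually_gt_at_top[of 0]
  proof eventually_elim
    case (elim R)
    define X where "X i = supball R \<inter> Ei i" for i
    have sbl: "supball R \<in> lmeasurable" by (simp add: supball_Qc)
    have Xl: "X i \<in> fmeasurable lebesgue" for i unfolding X_def
      by (rule bounded_set_imp_lmeasurable) (use Eim in \<open>auto simp: supball_Qc Qc_cbox intro: bounded_subset[OF bounded_cbox]\<close>)
    have Um: "(\<Union>i\<in>{1..l}. X i) \<in> sets lebesgue"
      by (rule sets.finite_UN) (auto intro: fmeasurableD[OF Xl])
    have "(\<Sum>i\<in>{1..l}. measure lebesgue (X i)) - (\<Sum>i\<in>{1..l}. \<Sum>j\<in>{1..<i}. measure lebesgue (X i \<inter> X j))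
           \<le> measure lebesgue (\<Union>i\<in>{1..l}. X i)" by (rule bonferroni[OF Xl])
    also have "\<dots> \<le> measure lebesgue (supball R :: (real^'n) set)"
      by (rule measure_mono_fmeasurable[OF _ Um sbl]) (auto simp: X_def)
    finally have ineq: "(\<Sum>i\<in>{1..l}. measure lebesgue (X i)) - (\<Sum>i\<in>{1..l}. \<Sum>j\<in>{1..<i}. measure lebesgue (X i \<inter> X j))
           \<le> measure lebesgue (supball R :: (real^'n) set)" .
    have mpos: "measure lebesgue (supball R :: (real^'n) set) > 0" using elim by (simp add: measure_supball)
    have XX: "X i \<inter> X j = supball R \<inter> (Ei i \<inter> Ei j)" for i j by (auto simp: X_def)
    show ?case using ineq mpos
      unfolding fR_def XX X_def[symmetric]
      by (simp add: sum_divide_distrib[symmetric] diff_divide_distrib[symmetric] divide_le_eq)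
  qed
  have "((\<lambda>R. (\<Sum>i\<in>{1..l}. fR (Ei i) R) - (\<Sum>i\<in>{1..l}. \<Sum>j\<in>{1..<i}. fR (Ei i \<inter> Ei j) R))
          \<longlongrightarrow> (\<Sum>i\<in>{1..l}. dE) - (\<Sum>i\<in>{1..l}. \<Sum>j\<in>{1..<i}. dd i j)) at_top"
    by (intro tendsto_diff tendsto_sum limE limdd)
  then have key: "(\<Sum>i\<in>{1..l}. dE) - (\<Sum>i\<in>{1..l}. \<Sum>j\<in>{1..<i}. dd i j) \<le> 1"
    by (rule tendsto_upperbound[OF _ ev trivial_limit_at_top_linorder])
  define t where "t = 2 * (real l * dE - 1) / (real l * (real l - 1))"
  show ?thesis
  proof (rule ccontr)
    assume "\<not> ?thesis"
    note neg = this
    have lt: "dd i j < t" if "i \<in> {1..l}" "j \<in> {1..l}" "i \<noteq> j" for i j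
    proof -
      have "\<not> (Dc ((\<lambda>x. x + v i) ` msum Wcube L \<inter> (\<lambda>x. x + v j) ` msum Wcube L)
              \<ge> 2 * (real l * Dc (msum Wcube L) - 1) / (real l * (real l - 1)))"
        using neg that by blast
      moreover have "(\<lambda>x. x + v i) ` msum Wcube L \<inter> (\<lambda>x. x + v j) ` msum Wcube L = Ei i \<inter> Ei j"
        using Ei_eq E_def by simp
      moreover have "Dc (msum Wcube L) = dE" using DcE E_def by simp
      ultimately show "dd i j < t" using Dcdd[of i j] unfolding t_def by simp
    qed
    define P where "P = Sigma {1..l} (\<lambda>i. {1..<i})"
    have Pfin: "finite P" unfolding P_def by auto
    have "(2,1) \<in> P" using assms(1) unfolding P_def by auto
    then have Pne: "P \<noteq> {}" by blast
    have "(\<Sum>i\<in>{1..l}. \<Sum>j\<in>{1..<i}. dd i j) = (\<Sum>(i,j)\<in>P. dd i j)"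
      unfolding P_def by (rule sum.Sigma) auto
    also have "\<dots> < (\<Sum>(i,j)\<in>P. t)"
      by (rule sum_strict_mono[OF Pfin Pne]) (auto simp: P_def intro!: lt)
    also have "\<dots> = (\<Sum>i\<in>{1..l}. \<Sum>j\<in>{1..<i}. t)"
      unfolding P_def by (rule sum.Sigma[symmetric]) auto
    also have "\<dots> = t * (real l * (real l - 1) / 2)"
      using gauss_real[of l] by (simp add: sum_distrib_left[symmetric] mult.commute)
    also have "\<dots> = real l * dE - 1"
    proof -
      have "real l * (real l - 1) \<noteq> 0" using assms(1) by auto
      then show ?thesis unfolding t_def by (simp add: field_simps)
    qed
    finally show False using key by simp
  qed
qed


end
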